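(* Let $q$ be a prime power and let $L\subseteq\{0,1,\ldots,q-1\}$. If $\mathcal{F}\subseteq2^{[n]}$ is a $q$-modular $L$-avoiding $L$-intersecting system, then $$|\mathcal{F}|\le\sum_{i=0}^{q-1}\binom{n}{i}.$$
   Context: For $L\subseteq\{0,\ldots,q-1\}$, $\mathcal{F}\subseteq2^{[n]}$ is $q$-modular $L$-intersecting if for all distinct $A,B\in\mathcal{F}$, $|A\cap B|\equiv\ell\pmod q$ for some $\ell\in L$, and $q$-modular $L$-avoiding if for every $A\in\mathcal{F}$, $|A|\not\equiv\ell\pmod q$ for all $\ell\in L$. *)

theory Defs
  imports "HOL-Computational_Algebra.Primes"
begin

definition prime_power :: "nat \<Rightarrow> bool" where
  "prime_power q \<longleftrightarrow> (\<exists>p k. prime (p::nat) \<and> k \<ge> 1 \<and> q = p ^ k)"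

definition modular_L_intersecting :: "nat \<Rightarrow> nat set \<Rightarrow> nat set set \<Rightarrow> bool" where
  "modular_L_intersecting q L F \<longleftrightarrow>
     (\<forall>A\<in>F. \<forall>B\<in>F. A \<noteq> B \<longrightarrow> (\<exists>l\<in>L. card (A \<inter> B) mod q = l mod q))"

definition modular_L_avoiding :: "nat \<Rightarrow> nat set \<Rightarrow> nat set set \<Rightarrow> bool" where
  "modular_L_avoiding q L F \<longleftrightarrow>
     (\<forall>A\<in>F. \<forall>l\<in>L. card A mod q \<noteq> l mod q)"

end

theory Submission imports Defs Complex_Main "HOL-Library.Function_Algebras" "HOL-Number_Theory.Cong" begin

lemma pp_dvd_choose:
  assumes p: "prime (p::nat)" and j: "0 < j" "j < p^k"
  shows "p dvd (p^k choose j)"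
proof (rule ccontr)
  assume np: "\<not> p dvd (p^k choose j)"
  obtain j' where j': "j = Suc j'" using j by (cases j) auto
  obtain N' where N': "p^k = Suc N'" using j by (cases "p^k") auto
  have "j * (p^k choose j) = p^k * (N' choose j')"
    using Suc_times_binomial[of j' N'] j' N' by simp
  hence "p^k dvd j * (p^k choose j)" by simp
  moreover have "coprime (p^k) (p^k choose j)"
    using np p by (simp add: prime_imp_coprime)
  ultimately have "p^k dvd j" using coprime_dvd_mult_left_iff by blast
  with j show False using dvd_imp_le by fastforce
qed

lemma choose_shift_mod:
  assumes p: "prime (p::nat)" and i: "i < p^k"
  shows "((x + p^k) choose i) mod p = (x choose i) mod p"
proof -
  have "(x + p^k) choose i = (\<Sum>j\<le>i. (p^k choose j) * (x choose (i - j)))"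
    using vandermonde[of "p^k" x i] by (simp add: add.commute)
  also have "\<dots> = (x choose i) + (\<Sum>j\<in>{1..i}. (p^k choose j) * (x choose (i - j)))"
  proof -
    have "{..i} = insert 0 {1..i}" by auto
    thus ?thesis by simp
  qed
  finally have eq: "(x + p^k) choose i = (x choose i) + (\<Sum>j\<in>{1..i}. (p^k choose j) * (x choose (i - j)))" .
  have "p dvd (\<Sum>j\<in>{1..i}. (p^k choose j) * (x choose (i - j)))"
    by (rule dvd_sum) (use pp_dvd_choose[OF p] i in auto)
  then obtain t where t: "(\<Sum>j\<in>{1..i}. (p^k choose j) * (x choose (i - j))) = p * t" by blast
  have "(x + p^k) choose i = (x choose i) + p * t" by (simp only: eq t)
  then show ?thesis by (simp only: mod_mult_self2)
qed

lemma choose_mod_periodic: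
  assumes p: "prime (p::nat)" and i: "i < p^k"
  shows "(x choose i) mod p = ((x mod p^k) choose i) mod p"
proof -
  have "((y + m * p^k) choose i) mod p = (y choose i) mod p" for y m
  proof (induction m)
    case (Suc m)
    have "((y + Suc m * p^k) choose i) mod p = (((y + m * p^k) + p^k) choose i) mod p"
      by (simp add: algebra_simps)
    also have "\<dots> = ((y + m * p^k) choose i) mod p" by (rule choose_shift_mod[OF p i])
    finally show ?case using Suc by simp
  qed simp
  from this[of "x mod p^k" "x div p^k"] show ?thesis by (simp add: mod_div_mult_eq)
qed

function coef :: "(nat \<Rightarrow> int) \<Rightarrow> nat \<Rightarrow> int" where
  "coef t x = t x - (\<Sum>i<x. coef t i * int (x choose i))"
  by auto
termination by (relation "measure snd") auto

declare coef.simps[simp del]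

lemma coef_interp:
  assumes "x < q"
  shows "(\<Sum>i<q. coef t i * int (x choose i)) = t x"
proof -
  have "(\<Sum>i<q. coef t i * int (x choose i)) = (\<Sum>i<Suc x. coef t i * int (x choose i))"
    by (rule sum.mono_neutral_right) (use assms in auto)
  also have "\<dots> = coef t x + (\<Sum>i<x. coef t i * int (x choose i))" by simp
  also have "\<dots> = t x" by (subst coef.simps[of t x]) simp
  finally show ?thesis .
qed

definition GG :: "(nat \<Rightarrow> int) \<Rightarrow> nat \<Rightarrow> nat \<Rightarrow> int" where
  "GG c q x = (\<Sum>i<q. c i * int (x choose i))"

lemma GG_periodic:
  assumes p: "prime (p::nat)"
  shows "[GG c (p^k) x = GG c (p^k) (x mod p^k)] (mod int p)"
proof -
  have "[c i * int (x choose i) = c i * int ((x mod p^k) choose i)] (mod int p)" if "i \<in> {..<p^k}" for i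
  proof -
    from that have "i < p^k" by simp
    from choose_mod_periodic[OF p this, of x]
    have "[x choose i = (x mod p^k) choose i] (mod p)"
      unfolding cong_def .
    hence "[int (x choose i) = int ((x mod p^k) choose i)] (mod int p)"
      by (simp only: cong_int_iff)
    thus ?thesis by (rule cong_mult[OF cong_refl])
  qed
  thus ?thesis unfolding GG_def by (rule cong_sum)
qed

lemma finite_Sy: "finite {S. S \<subseteq> {1..n::nat} \<and> card S < q}"
proof -
  have "{S. S \<subseteq> {1..n} \<and> card S < q} \<subseteq> Pow {1..n}" by blast
  thus ?thesis by (rule finite_subset) simp
qed

lemma GG_expand:
  assumes "A \<subseteq> {1..n::nat}" "B \<subseteq> {1..n}"
  shows "GG c q (card (A \<inter> B)) = (\<Sum>S\<in>{S. S \<subseteq> {1..n} \<and> card S < q}. if S \<subseteq> A \<and> S \<subseteq> B then c (card S) else 0)"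
proof -
  let ?X = "{S. S \<subseteq> A \<inter> B \<and> card S < q}"
  have fin: "finite (A \<inter> B)" using assms finite_subset by blast
  have "?X \<subseteq> Pow (A \<inter> B)" by blast
  hence finX: "finite ?X" using fin by (meson finite_Pow_iff finite_subset)
  have "GG c q (card (A \<inter> B)) = (\<Sum>i<q. c i * int (card {S. S \<subseteq> A \<inter> B \<and> card S = i}))"
    unfolding GG_def using n_subsets[OF fin] by simp
  also have "\<dots> = (\<Sum>i<q. \<Sum>S\<in>{S\<in>?X. card S = i}. c (card S))"
  proof (rule sum.cong[OF refl])
    fix i assume "i \<in> {..<q}"
    then have e: "{S\<in>?X. card S = i} = {S. S \<subseteq> A \<inter> B \<and> card S = i}" by auto
    have "(\<Sum>S\<in>{S\<in>?X. card S = i}. c (card S)) = (\<Sum>S\<in>{S. S \<subseteq> A \<inter> B \<and> card S = i}. c i)"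
      unfolding e by (rule sum.cong) auto
    then show "c i * int (card {S. S \<subseteq> A \<inter> B \<and> card S = i}) = (\<Sum>S\<in>{S\<in>?X. card S = i}. c (card S))"
      by (simp only: sum_constant mult.commute of_nat_id)
  qed
  also have "\<dots> = (\<Sum>S\<in>?X. c (card S))"
    by (rule sum.group) (use finX in auto)
  also have "?X = {S\<in>{S. S \<subseteq> {1..n} \<and> card S < q}. S \<subseteq> A \<and> S \<subseteq> B}"
    using assms by auto
  also have "(\<Sum>S\<in>\<dots>. c (card S)) = (\<Sum>S\<in>{S. S \<subseteq> {1..n} \<and> card S < q}. if S \<subseteq> A \<and> S \<subseteq> B then c (card S) else 0)"
    by (rule sum.inter_filter) (rule finite_Sy)
  finally show ?thesis .
qed

lemma card_Sy: "card {S. S \<subseteq> {1..n::nat} \<and> card S < q} = (\<Sum>i<q. n choose i)"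
proof -
  let ?Y = "{S. S \<subseteq> {1..n} \<and> card S < q}"
  have finY: "finite ?Y" by (rule finite_Sy)
  have "card ?Y = (\<Sum>S\<in>?Y. 1)" by simp
  also have "\<dots> = (\<Sum>i<q. \<Sum>S\<in>{S\<in>?Y. card S = i}. 1)"
    by (rule sum.group[symmetric]) (use finY in auto)
  also have "\<dots> = (\<Sum>i<q. n choose i)"
  proof (rule sum.cong[OF refl])
    fix i assume "i \<in> {..<q}"
    then have e: "{S\<in>?Y. card S = i} = {S. S \<subseteq> {1..n} \<and> card S = i}" by auto
    show "(\<Sum>S\<in>{S\<in>?Y. card S = i}. 1) = n choose i"
      unfolding e using n_subsets[of "{1..n}" i] by simp
  qed
  finally show ?thesis .
qed

lemma sum_fun_apply: "(\<Sum>x\<in>A. f x) y = (\<Sum>x\<in>A. f x y)"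
  for f :: "'a \<Rightarrow> 'b \<Rightarrow> 'c::comm_monoid_add"
  by (induction A rule: infinite_finite_induct) auto

lemma clear_denoms:
  fixes f :: "'a \<Rightarrow> rat"
  assumes "finite X"
  shows "\<exists>D::int. D > 0 \<and> (\<forall>x\<in>X. of_int D * f x \<in> \<int>)"
  using assms
proof (induction X rule: finite_induct)
  case empty
  show ?case by (rule exI[of _ 1]) simp
next
  case (insert x X)
  then obtain D where D: "D > 0" "\<forall>y\<in>X. of_int D * f y \<in> \<int>" by blast
  obtain a b where ab: "quotient_of (f x) = (a, b)" by (cases "quotient_of (f x)")
  have b: "b > 0" using quotient_of_denom_pos[OF ab] .
  have fx: "f x = of_int a / of_int b" using quotient_of_div[OF ab] .
  have "\<forall>y\<in>insert x X. of_int (D * b) * f y \<in> \<int>"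
  proof
    fix y assume "y \<in> insert x X"
    then consider "y = x" | "y \<in> X" by blast
    then show "of_int (D * b) * f y \<in> \<int>"
    proof cases
      case 1
      have ba: "of_int b * f x = of_int a" using b fx by simp
      have "of_int (D * b) * f y = of_int D * (of_int b * f x)" using 1 by (simp add: mult.assoc)
      also have "\<dots> = of_int (D * a)" using ba by simp
      finally have "of_int (D * b) * f y = of_int (D * a)" .
      then show ?thesis by (metis Ints_of_int)
    next
      case 2
      have "of_int (D * b) * f y = of_int b * (of_int D * f y)" by simp
      moreover have "of_int D * f y \<in> \<int>" using D(2) 2 by blast
      ultimately show ?thesis by (metis Ints_mult Ints_of_int)
    qed
  qed
  then show ?case using D(1) b by (intro exI[of _ "D * b"]) simp
qed

interpretation fv: vector_space "(\<lambda>(r::rat) (f::nat set \<Rightarrow> rat) x. r * f x)"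
  by unfold_locales (auto simp: fun_eq_iff algebra_simps)


locale mt =
  fixes p k n :: nat and L :: "nat set" and F :: "nat set set" and c :: "nat \<Rightarrow> int"
  assumes p: "prime p" and k: "k \<ge> 1" and L: "L \<subseteq> {0..<p^k}" and Fsub: "F \<subseteq> Pow {1..n}"
    and av: "modular_L_avoiding (p^k) L F" and it: "modular_L_intersecting (p^k) L F"
    and c: "c = coef (\<lambda>y. if y \<in> L then 0 else 1)"
begin

abbreviation "qq \<equiv> p^k"
abbreviation "Sy \<equiv> {S. S \<subseteq> {1..n} \<and> card S < qq}"

lemma q_pos: "qq > 0" using p prime_gt_0_nat by simp

lemma q_ge2: "qq \<ge> 2"
proof -
  have "p \<ge> 2" using p prime_ge_2_nat by blast
  hence "p^1 \<le> p^k" using k by (intro power_increasing) auto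
  thus ?thesis using \<open>p \<ge> 2\<close> by simp
qed

lemma GG_small: "x < qq \<Longrightarrow> GG c qq x = (if x \<in> L then 0 else 1)"
  unfolding GG_def c by (rule coef_interp)

lemma G_off:
  assumes "A \<in> F" "B \<in> F" "A \<noteq> B"
  shows "int p dvd GG c qq (card (A \<inter> B))"
proof -
  let ?x = "card (A \<inter> B)"
  obtain l where l: "l \<in> L" "?x mod qq = l mod qq"
    using it assms unfolding modular_L_intersecting_def by blast
  have "l < qq" using L l(1) by auto
  hence "?x mod qq \<in> L" using l by simp
  hence "GG c qq (?x mod qq) = 0" using GG_small[of "?x mod qq"] q_pos by simp
  moreover have "[GG c qq ?x = GG c qq (?x mod qq)] (mod int p)" by (rule GG_periodic[OF p])
  ultimately show ?thesis by (simp add: cong_0_iff)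
qed

lemma G_diag:
  assumes "A \<in> F"
  shows "[GG c qq (card A) = 1] (mod int p)"
proof -
  let ?x = "card A"
  have "?x mod qq \<notin> L"
  proof
    assume "?x mod qq \<in> L"
    with av assms have "?x mod qq \<noteq> (?x mod qq) mod qq" unfolding modular_L_avoiding_def by blast
    thus False by simp
  qed
  hence "GG c qq (?x mod qq) = 1" using GG_small[of "?x mod qq"] q_pos by simp
  moreover have "[GG c qq ?x = GG c qq (?x mod qq)] (mod int p)" by (rule GG_periodic[OF p])
  ultimately show ?thesis by simp
qed

definition rel :: "nat set set \<Rightarrow> (nat set \<Rightarrow> int) \<Rightarrow> bool" where
  "rel F' \<mu> \<longleftrightarrow> (\<forall>S\<in>Sy. (\<Sum>A\<in>F'. \<mu> A * (if S \<subseteq> A then 1 else 0)) = 0)"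

lemma finF: "finite F"
  using Fsub by (rule finite_subset) simp

lemma key_step:
  assumes F': "F' \<subseteq> F" and r: "rel F' \<mu>" and B: "B \<in> F'"
  shows "int p dvd \<mu> B"
proof -
  have finF': "finite F'" using F' finF finite_subset by blast
  have BF: "B \<in> F" using B F' by blast
  have Bn: "B \<subseteq> {1..n}" using BF Fsub by blast
  have "(\<Sum>A\<in>F'. \<mu> A * GG c qq (card (A \<inter> B)))
      = (\<Sum>A\<in>F'. \<Sum>S\<in>Sy. (if S \<subseteq> B then c (card S) else 0) * (\<mu> A * (if S \<subseteq> A then 1 else 0)))"
  proof (rule sum.cong[OF refl])
    fix A assume "A \<in> F'"
    hence An: "A \<subseteq> {1..n}" using F' Fsub by blast
    show "\<mu> A * GG c qq (card (A \<inter> B)) = (\<Sum>S\<in>Sy. (if S \<subseteq> B then c (card S) else 0) * (\<mu> A * (if S \<subseteq> A then 1 else 0)))"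
      unfolding GG_expand[OF An Bn] sum_distrib_left
      by (rule sum.cong[OF refl]) auto
  qed
  also have "\<dots> = (\<Sum>S\<in>Sy. \<Sum>A\<in>F'. (if S \<subseteq> B then c (card S) else 0) * (\<mu> A * (if S \<subseteq> A then 1 else 0)))"
    by (rule sum.swap)
  also have "\<dots> = (\<Sum>S\<in>Sy. (if S \<subseteq> B then c (card S) else 0) * (\<Sum>A\<in>F'. \<mu> A * (if S \<subseteq> A then 1 else 0)))"
    by (simp only: sum_distrib_left)
  also have "\<dots> = 0" using r unfolding rel_def by simp
  finally have s0: "(\<Sum>A\<in>F'. \<mu> A * GG c qq (card (A \<inter> B))) = 0" .
  have "(\<Sum>A\<in>F'. \<mu> A * GG c qq (card (A \<inter> B))) = \<mu> B * GG c qq (card B) + (\<Sum>A\<in>F'-{B}. \<mu> A * GG c qq (card (A \<inter> B)))"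
    using sum.remove[OF finF' B, of "\<lambda>A. \<mu> A * GG c qq (card (A \<inter> B))"] by simp
  moreover have "int p dvd (\<Sum>A\<in>F'-{B}. \<mu> A * GG c qq (card (A \<inter> B)))"
  proof (rule dvd_sum)
    fix A assume "A \<in> F' - {B}"
    hence "A \<in> F" "A \<noteq> B" using F' by auto
    thus "int p dvd \<mu> A * GG c qq (card (A \<inter> B))" using G_off[OF _ BF] by simp
  qed
  ultimately have d1: "int p dvd \<mu> B * GG c qq (card B)" using s0
    by (metis add.commute add_diff_cancel dvd_0_right dvd_diff)
  have "int p dvd GG c qq (card B) - 1" using G_diag[OF BF]
    by (simp add: cong_iff_dvd_diff dvd_diff_commute)
  then obtain s where s: "GG c qq (card B) = 1 + int p * s" by (metis add.commute diff_add_cancel dvdE)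
  have "\<mu> B * GG c qq (card B) = \<mu> B + int p * (\<mu> B * s)" unfolding s by (simp add: algebra_simps)
  with d1 show ?thesis by (metis dvd_add_left_iff dvd_triv_left)
qed

lemma key_pow:
  assumes F': "F' \<subseteq> F"
  shows "rel F' \<mu> \<Longrightarrow> B \<in> F' \<Longrightarrow> int p ^ e dvd \<mu> B"
proof (induction e arbitrary: \<mu> B)
  case 0 then show ?case by simp
next
  case (Suc e)
  define \<nu> where "\<nu> = (\<lambda>A. \<mu> A div int p)"
  have mu: "\<mu> A = int p * \<nu> A" if "A \<in> F'" for A
    using key_step[OF F' Suc.prems(1) that] unfolding \<nu>_def by simp
  have "rel F' \<nu>"
    unfolding rel_def
  proof
    fix S assume S: "S \<in> Sy"
    have "int p * (\<Sum>A\<in>F'. \<nu> A * (if S \<subseteq> A then 1 else 0)) = (\<Sum>A\<in>F'. \<mu> A * (if S \<subseteq> A then 1 else 0))"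
      unfolding sum_distrib_left by (rule sum.cong[OF refl]) (simp add: mu)
    also have "\<dots> = 0" using Suc.prems(1) S unfolding rel_def by blast
    finally show "(\<Sum>A\<in>F'. \<nu> A * (if S \<subseteq> A then 1 else 0)) = 0" using p by simp
  qed
  from Suc.IH[OF this Suc.prems(2)] have "int p ^ e dvd \<nu> B" .
  thus ?case using mu[OF Suc.prems(2)] by (simp add: mult_dvd_mono)
qed

lemma key:
  assumes F': "F' \<subseteq> F" and r: "rel F' \<mu>" and B: "B \<in> F'"
  shows "\<mu> B = 0"
proof (rule ccontr)
  assume nz: "\<mu> B \<noteq> 0"
  let ?m = "nat \<bar>\<mu> B\<bar>"
  have "int p ^ ?m dvd \<mu> B" by (rule key_pow[OF F' r B])
  hence "\<bar>int p ^ ?m\<bar> \<le> \<bar>\<mu> B\<bar>" using dvd_imp_le_int nz by blast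
  moreover have "?m < p ^ ?m"
  proof -
    have "?m < 2 ^ ?m" by (rule less_exp)
    also have "\<dots> \<le> p ^ ?m" using prime_ge_2_nat[OF p] by (rule power_mono) simp
    finally show ?thesis .
  qed
  hence "int ?m < int p ^ ?m" by (metis of_nat_less_iff of_nat_power)
  hence "\<bar>\<mu> B\<bar> < \<bar>int p ^ ?m\<bar>" by simp
  ultimately show False by simp
qed


lemma card_bound: "card F \<le> card Sy"
proof -
  define v where "v A = (\<lambda>S. if S \<in> Sy \<and> S \<subseteq> A then (1::rat) else 0)" for A
  define \<delta> where "\<delta> S = (\<lambda>T. if T = S then (1::rat) else 0)" for S :: "nat set"
  have inj: "inj_on v F"
  proof (rule inj_onI)
    fix A B assume A: "A \<in> F" and B: "B \<in> F" and e: "v A = v B"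
    show "A = B"
    proof (rule ccontr)
      assume "A \<noteq> B"
      then obtain x where x: "(x \<in> A \<and> x \<notin> B) \<or> (x \<in> B \<and> x \<notin> A)" by blast
      have "A \<subseteq> {1..n}" "B \<subseteq> {1..n}" using A B Fsub by auto
      with x have "{x} \<in> Sy" using q_ge2 by auto
      moreover have "v A {x} = v B {x}" using e by simp
      ultimately show False using x unfolding v_def by auto
    qed
  qed
  have span: "v ` F \<subseteq> fv.span (\<delta> ` Sy)"
  proof
    fix w assume "w \<in> v ` F" then obtain A where A: "A \<in> F" "w = v A" by blast
    have "v A = (\<Sum>S\<in>Sy. (\<lambda>x. v A S * \<delta> S x))"
    proof
      fix T
      have e: "(\<lambda>S. v A S * \<delta> S T) = (\<lambda>S. if S = T then v A S else 0)"
        unfolding \<delta>_def by auto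
      have "(\<Sum>S\<in>Sy. (\<lambda>x. v A S * \<delta> S x)) T = (\<Sum>S\<in>Sy. v A S * \<delta> S T)"
        by (rule sum_fun_apply)
      also have "\<dots> = (\<Sum>S\<in>Sy. if S = T then v A S else 0)" by (simp only: e)
      also have "\<dots> = (if T \<in> Sy then v A T else 0)" using finite_Sy[of n qq] by (simp add: sum.delta')
      also have "\<dots> = v A T" unfolding v_def by simp
      finally show "v A T = (\<Sum>S\<in>Sy. (\<lambda>x. v A S * \<delta> S x)) T" by simp
    qed
    moreover have "(\<Sum>S\<in>Sy. (\<lambda>x. v A S * \<delta> S x)) \<in> fv.span (\<delta> ` Sy)"
      by (rule fv.span_sum) (auto intro: fv.span_scale fv.span_base)
    ultimately show "w \<in> fv.span (\<delta> ` Sy)" using A by simp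
  qed
  have indep: "fv.independent (v ` F)"
    unfolding fv.independent_explicit_finite_subsets
  proof (intro allI impI ballI)
    fix T u w assume T: "T \<subseteq> v ` F" "finite T" and sm: "(\<Sum>y\<in>T. (\<lambda>x. u y * y x)) = 0" and w: "w \<in> T"
    define F' where "F' = {A\<in>F. v A \<in> T}"
    have F'F: "F' \<subseteq> F" unfolding F'_def by blast
    have TF': "T = v ` F'" using T unfolding F'_def by blast
    have injF': "inj_on v F'" using inj F'F by (rule inj_on_subset)
    have finF': "finite F'" using finF F'F finite_subset by blast
    obtain D where D: "D > 0" "\<forall>A\<in>F'. of_int D * u (v A) \<in> \<int>"
      using clear_denoms[OF finF', of "\<lambda>A. u (v A)"] by blast
    define \<mu> where "\<mu> A = (SOME m. of_int m = of_int D * u (v A))" for A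
    have mu: "of_int (\<mu> A) = of_int D * u (v A)" if "A \<in> F'" for A
    proof -
      have "\<exists>m. of_int m = of_int D * u (v A)" using D(2) that unfolding Ints_def by (metis rangeE)
      thus ?thesis unfolding \<mu>_def by (rule someI_ex)
    qed
    have r: "rel F' \<mu>"
      unfolding rel_def
    proof
      fix S assume S: "S \<in> Sy"
      have "(\<Sum>y\<in>T. u y * y S) = 0"
        using fun_cong[OF sm, of S] unfolding sum_fun_apply by simp
      hence "(\<Sum>A\<in>F'. u (v A) * v A S) = 0"
        unfolding TF' sum.reindex[OF injF'] by (simp add: o_def)
      hence "(\<Sum>A\<in>F'. u (v A) * (if S \<subseteq> A then 1 else 0)) = 0"
        using S unfolding v_def by simp
      hence "of_int D * (\<Sum>A\<in>F'. u (v A) * (if S \<subseteq> A then 1 else 0)) = 0" by simp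
      hence "(\<Sum>A\<in>F'. of_int D * u (v A) * (if S \<subseteq> A then 1 else 0)) = (0::rat)"
        by (simp add: sum_distrib_left mult.assoc)
      hence "(\<Sum>A\<in>F'. of_int (\<mu> A) * (if S \<subseteq> A then 1 else 0)) = (0::rat)"
        by (simp add: mu cong: sum.cong)
      moreover have "of_int (\<Sum>A\<in>F'. \<mu> A * (if S \<subseteq> A then 1 else 0)) = (\<Sum>A\<in>F'. of_int (\<mu> A) * (if S \<subseteq> A then 1 else (0::rat)))"
        unfolding of_int_sum by (rule sum.cong) auto
      ultimately have "of_int (\<Sum>A\<in>F'. \<mu> A * (if S \<subseteq> A then 1 else 0)) = (0::rat)"
        by simp
      thus "(\<Sum>A\<in>F'. \<mu> A * (if S \<subseteq> A then 1 else 0)) = 0" by (simp only: of_int_eq_0_iff)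
    qed
    obtain A where A: "A \<in> F'" "w = v A" using w TF' by blast
    have "\<mu> A = 0" by (rule key[OF F'F r A(1)])
    hence "of_int D * u (v A) = 0" using mu[OF A(1)] by simp
    thus "u w = 0" using D(1) A(2) by simp
  qed
  have finD: "finite (\<delta> ` Sy)" using finite_Sy by simp
  have "card (v ` F) \<le> card (\<delta> ` Sy)"
    using fv.independent_span_bound[OF finD indep span] by simp
  also have "\<dots> \<le> card Sy" by (rule card_image_le[OF finite_Sy])
  finally show ?thesis using card_image[OF inj] by simp
qed

end


theorem mainTheorem15:
  fixes q n :: nat and L :: "nat set" and F :: "nat set set"
  assumes "prime_power q"
    and "L \<subseteq> {0..<q}"
    and "F \<subseteq> Pow {1..n}"
    and "modular_L_avoiding q L F"
    and "modular_L_intersecting q L F"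
  shows "card F \<le> (\<Sum>i=0..<q. n choose i)"
proof -
  obtain p k where pk: "prime p" "k \<ge> 1" "q = p^k"
    using assms(1) unfolding prime_power_def by blast
  interpret mt p k n L F "coef (\<lambda>y. if y \<in> L then 0 else 1)"
    by unfold_locales (use assms pk in auto)
  have "card F \<le> card {S. S \<subseteq> {1..n} \<and> card S < p^k}" by (rule card_bound)
  also have "\<dots> = (\<Sum>i<p^k. n choose i)" by (rule card_Sy)
  finally show ?thesis using pk(3) by (simp add: atLeast0LessThan)
qed

end
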